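(* Let $n,m,k$ be positive integers with $k<m\le kn$. For every single-category instance with $n$ agents, $m$ goods and cardinality constraint $k$, $$\frac{\text{OPT-USW}(I)}{\max_{\mathcal{A}\in \mathcal{C}_k(I)}\text{USW}(\mathcal{A})}\le \frac{1}{2}\left(1+\sqrt{1+\frac{m-1}{k}}\right).$$ Moreover, if $m=k(c^2-1)+1$ for some integer $c\ge 2$, then there exists such an instance (with some number $n$ of agents satisfying $kn\ge m$) for which this ratio equals $\frac{1}{2}\left(1+\sqrt{1+\frac{m-1}{k}}\right)$. Consequently, the utilitarian price of cardinality in the single-category case is $\frac{1}{2}\left(1+\sqrt{1+\frac{m-1}{k}}\right)$ (as an upper bound valid for all instances, attained whenever $m=k(c^2-1)+1$).
   Context: A single-category instance consists of a set $N$ of $n$ agents and a set $M$ of $m$ indivisible goods; each agent $i$ has an additive utility function $u_i:2^M\to\mathbb{R}_{\ge 0}$ with $u_i(\emptyset)=0$ and $u_i(M)=1$ (normalized). An allocation $\mathcal{A}=(A_1,\dots,A_n)$ is a partition of $M$ into $n$ (possibly empty) bundles, agent $i$ receiving $A_i$. Given a positive integer $k$ (the cardinality constraint, with $k\ge m/n$), an allocation is cardinal if $|A_i|\le k$ for all $i$; $\mathcal{C}_k(I)$ denotes the set of cardinal allocations. $\text{USW}(\mathcal{A})=\sum_{i\in N}u_i(A_i)$, and $\text{OPT-USW}(I)$ is the maximum of $\text{USW}$ over all allocations. The utilitarian price of cardinality is the supremum of the ratio $\text{OPT-USW}(I)/\max_{\mathcal{A}\in\mathcal{C}_k(I)}\text{USW}(\mathcal{A})$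 over instances. *)

theory Defs
  imports Complex_Main
begin

text \<open>Agents are 0..<n, goods are 0..<m. An instance is given by
  u :: agent => good => real, the additive utility of agent i for good g.\<close>

definition valid_instance :: "nat \<Rightarrow> nat \<Rightarrow> (nat \<Rightarrow> nat \<Rightarrow> real) \<Rightarrow> bool" where
  "valid_instance n m u \<longleftrightarrow>
     (\<forall>i<n. \<forall>g<m. u i g \<ge> 0) \<and> (\<forall>i<n. (\<Sum>g<m. u i g) = 1)"

definition util :: "(nat \<Rightarrow> nat \<Rightarrow> real) \<Rightarrow> nat \<Rightarrow> nat set \<Rightarrow> real" where
  "util u i S = (\<Sum>g\<in>S. u i g)"

definition is_allocation :: "nat \<Rightarrow> nat \<Rightarrow> (nat \<Rightarrow> nat set) \<Rightarrow> bool" where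
  "is_allocation n m A \<longleftrightarrow>
     (\<forall>i<n. A i \<subseteq> {..<m}) \<and>
     (\<forall>i<n. \<forall>j<n. i \<noteq> j \<longrightarrow> A i \<inter> A j = {}) \<and>
     (\<Union>i<n. A i) = {..<m}"

definition is_cardinal :: "nat \<Rightarrow> nat \<Rightarrow> nat \<Rightarrow> (nat \<Rightarrow> nat set) \<Rightarrow> bool" where
  "is_cardinal n m k A \<longleftrightarrow> is_allocation n m A \<and> (\<forall>i<n. card (A i) \<le> k)"

definition USW :: "nat \<Rightarrow> (nat \<Rightarrow> nat \<Rightarrow> real) \<Rightarrow> (nat \<Rightarrow> nat set) \<Rightarrow> real" where
  "USW n u A = (\<Sum>i<n. util u i (A i))"

definition OPT_USW :: "nat \<Rightarrow> nat \<Rightarrow> (nat \<Rightarrow> nat \<Rightarrow> real) \<Rightarrow> real" where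
  "OPT_USW n m u = Max {USW n u A | A. is_allocation n m A}"

definition MAX_CARD_USW :: "nat \<Rightarrow> nat \<Rightarrow> nat \<Rightarrow> (nat \<Rightarrow> nat \<Rightarrow> real) \<Rightarrow> real" where
  "MAX_CARD_USW n m k u = Max {USW n u A | A. is_cardinal n m k A}"

definition poc_bound :: "nat \<Rightarrow> nat \<Rightarrow> real" where
  "poc_bound m k = (1 + sqrt (1 + (real m - 1) / real k)) / 2"

end

theory Submission
  imports Defs "HOL-Library.FuncSet"
begin


lemma agent_ineq:
  fixes r w v :: real and b k :: nat
  assumes r1: "r \<ge> 1" and k1: "k \<ge> 1" and v0: "0 \<le> v" and vw: "v \<le> w" and w1: "w \<le> 1"
    and b0: "b = 0 \<Longrightarrow> w = 0"
  shows "w - r * ((if b \<le> k then 1 else real k / real b) * w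
              + (1 - (if b \<le> k then 1 else real k / real b)) * v)
         \<le> real b / (4*r*k) - (r - 1 + 1/(4*r*k)) * v"
proof -
  define d where "d = 1/(4*r*k)"
  have d0: "d > 0" using r1 k1 by (simp add: d_def)
  have bd: "real b / (4*r*k) = real b * d" by (simp add: d_def)
  show ?thesis
  proof (cases "b \<le> k")
    case True
    show ?thesis
    proof (cases "b = 0")
      case True
      then have "w = 0" "v = 0" using b0 v0 vw by auto
      then show ?thesis using True by simp
    next
      case False
      then have b1: "real b \<ge> 1" by simp
      have "(1 - r) * w \<le> (1 - r) * v" using r1 vw by (simp add: mult_left_mono_neg)
      moreover have "d * v \<le> d * real b" using d0 v0 vw w1 b1
        by (intro mult_left_mono) auto
      ultimately show ?thesis using \<open>b \<le> k\<close> unfolding bd d_def[symmetric] by (simp add: algebra_simps)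
    qed
  next
    case False
    define a where "a = real k / real b"
    have bpos: "real b > 0" using False by simp
    have b1: "real b \<ge> 1" using False by simp
    have eq: "w - r * (a * w + (1 - a) * v) - (real b * d - (r - 1 + d) * v)
        = w * (1 - r*a) + v * (r*a - 1 + d) - real b * d" by (simp add: algebra_simps)
    have key: "w * (1 - r*a) + v * (r*a - 1 + d) - real b * d \<le> 0"
    proof (cases "r * a \<ge> 1")
      case True
      have "w * (1 - r*a) \<le> v * (1 - r*a)" using True vw by (simp add: mult_right_mono_neg)
      moreover have "v * d \<le> real b * d" using v0 vw w1 b1 d0 by (intro mult_right_mono) auto
      ultimately show ?thesis by (simp add: algebra_simps)
    next
      case False
      have "w * (1 - r*a) \<le> 1 * (1 - r*a)" using False w1 by (intro mult_right_mono) auto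
      moreover have q: "1 - r*a - real b * d \<le> 0"
      proof -
        have rk: "r * real k > 0" using r1 k1 by simp
        have "0 \<le> (real b - 2*r*real k)^2" by simp
        hence "4*(r*real k)*real b \<le> 4*(r*real k)*(r*real k) + real b * real b"
          by (simp add: power2_eq_square algebra_simps)
        hence "1 \<le> (4*(r*real k)*(r*real k) + real b * real b) / (4*(r*real k)*real b)"
          using rk bpos by (simp add: le_divide_eq)
        also have "\<dots> = r*a + real b * d" using rk bpos r1 k1 unfolding a_def d_def
          by (simp add: field_simps)
        finally show ?thesis by simp
      qed
      moreover have "(1 - v) * (1 - r*a - real b * d) \<le> 0"
        using q v0 vw w1 by (intro mult_nonneg_nonpos) auto
      moreover have "v * (d - real b * d) \<le> 0"
        using v0 d0 b1 by (intro mult_nonneg_nonpos) (auto simp: algebra_simps)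
      ultimately show ?thesis by (simp add: algebra_simps)
    qed
    show ?thesis using eq key False unfolding bd a_def[symmetric] d_def[symmetric]
      by (simp add: algebra_simps)
  qed
qed




lemma topk_aux:
  fixes \<phi> :: "nat \<Rightarrow> real"
  shows "\<forall>B. finite B \<longrightarrow> card B = k + d \<longrightarrow>
     (\<exists>K\<subseteq>B. card K = k \<and> real k * sum \<phi> B \<le> real (card B) * sum \<phi> K)"
proof (induction d)
  case 0
  then show ?case by auto
next
  case (Suc d)
  show ?case
  proof (intro allI impI)
    fix B :: "nat set" assume fB: "finite B" and cB: "card B = k + Suc d"
    then have "B \<noteq> {}" by auto
    obtain x where xB: "x \<in> B" and xmin: "\<forall>y\<in>B. \<phi> x \<le> \<phi> y"
      using fB \<open>B \<noteq> {}\<close> by (metis arg_min_if_finite(1) arg_min_if_finite(2) not_less)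
    define B' where "B' = B - {x}"
    have fB': "finite B'" and cB': "card B' = k + d" using fB cB xB by (auto simp: B'_def)
    obtain K where KB: "K \<subseteq> B'" and cK: "card K = k"
      and ih: "real k * sum \<phi> B' \<le> real (card B') * sum \<phi> K"
      using Suc.IH fB' cB' by blast
    have sB: "sum \<phi> B = \<phi> x + sum \<phi> B'" using fB xB unfolding B'_def
      by (simp add: sum.remove)
    have KB2: "K \<subseteq> B" using KB by (auto simp: B'_def)
    show "\<exists>K\<subseteq>B. card K = k \<and> real k * sum \<phi> B \<le> real (card B) * sum \<phi> K"
    proof (cases "k + d = 0")
      case True
      then have "k = 0" by simp
      then show ?thesis by (intro exI[of _ "{}"]) auto
    next
      case False
      have pos: "real (k + d) > 0" using False by linarith
      have m1: "real (card B') * \<phi> x \<le> sum \<phi> B'"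
      proof -
        have "sum (\<lambda>_. \<phi> x) B' \<le> sum \<phi> B'" using xmin by (intro sum_mono) (auto simp: B'_def)
        then show ?thesis by simp
      qed
      have "real (k+d) * (real k * sum \<phi> B) = real (k+d) * real k * sum \<phi> B' + real k * (real (k+d) * \<phi> x)"
        using sB by (simp add: algebra_simps)
      also have "\<dots> \<le> real (k+d) * real k * sum \<phi> B' + real k * sum \<phi> B'"
        using m1 cB' by (intro add_left_mono mult_left_mono) auto
      also have "\<dots> = real (Suc (k+d)) * (real k * sum \<phi> B')" by (simp add: algebra_simps)
      also have "\<dots> \<le> real (Suc (k+d)) * (real (k+d) * sum \<phi> K)"
        using ih cB' by (intro mult_left_mono) auto
      also have "\<dots> = real (k+d) * (real (card B) * sum \<phi> K)" using cB by (simp add: algebra_simps)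
      finally have "real k * sum \<phi> B \<le> real (card B) * sum \<phi> K"
        using pos by (simp add: mult_le_cancel_left_pos)
      then show ?thesis using KB2 cK by blast
    qed
  qed
qed

lemma topk:
  fixes \<phi> :: "nat \<Rightarrow> real"
  assumes "finite B" "k \<le> card B"
  shows "\<exists>K\<subseteq>B. card K = k \<and> real k * sum \<phi> B \<le> real (card B) * sum \<phi> K"
proof -
  have "card B = k + (card B - k)" using assms by simp
  then show ?thesis using topk_aux[of k "card B - k" \<phi>] assms by blast
qed

lemma wavg:
  fixes c g :: "nat \<Rightarrow> real"
  assumes "finite J" "\<forall>j\<in>J. c j \<ge> 0" "(\<Sum>j\<in>J. c j) * t \<le> (\<Sum>j\<in>J. c j * g j)" "(\<Sum>j\<in>J. c j) > 0"
  shows "\<exists>j\<in>J. c j > 0 \<and> g j \<ge> t"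
proof (rule ccontr)
  assume "\<not> ?thesis"
  then have H: "\<forall>j\<in>J. c j > 0 \<longrightarrow> g j < t" by auto
  obtain j0 where j0: "j0 \<in> J" "c j0 > 0"
    using assms(4) by (metis not_less sum_nonpos)
  have "(\<Sum>j\<in>J. c j * g j) < (\<Sum>j\<in>J. c j * t)"
  proof (rule sum_strict_mono_ex1[OF assms(1)])
    show "\<forall>x\<in>J. c x * g x \<le> c x * t"
      using H assms(2) by (metis less_eq_real_def mult_le_cancel_left_pos order_refl mult_zero_left)
    show "\<exists>a\<in>J. c a * g a < c a * t" using j0 H by (intro bexI[of _ j0]) (auto intro: mult_strict_left_mono)
  qed
  also have "\<dots> = (\<Sum>j\<in>J. c j) * t" by (simp add: sum_distrib_right)
  finally show False using assms(3) by simp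
qed




lemma assign:
  fixes u :: "nat \<Rightarrow> nat \<Rightarrow> real" and c :: "nat \<Rightarrow> nat"
  assumes "finite E"
  shows "card E \<le> (\<Sum>j<n. c j) \<Longrightarrow> \<exists>h. (\<forall>e\<in>E. h e < n) \<and> (\<forall>j<n. card {e\<in>E. h e = j} \<le> c j) \<and>
      (\<Sum>e\<in>E. \<Sum>j<n. real (c j) * u j e) \<le> real (\<Sum>j<n. c j) * (\<Sum>e\<in>E. u (h e) e)"
  using assms
proof (induction E arbitrary: c rule: finite_induct)
  case empty
  then show ?case by auto
next
  case (insert x E)
  define F where "F = (\<Sum>j<n. c j)"
  have cardI: "card (insert x E) = Suc (card E)" using insert by simp
  have F1: "F \<ge> Suc (card E)" using insert.prems cardI by (simp add: F_def)
  define X where "X = (\<Sum>e\<in>E. \<Sum>i<n. real (c i) * u i e)"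
  have sumupd: "(\<Sum>i<n. (c(j := c j - 1)) i) = F - 1" if "j < n" "c j \<ge> 1" for j
  proof -
    have "(\<Sum>i<n. (c(j := c j - 1)) i) = (c(j := c j - 1)) j + (\<Sum>i\<in>{..<n} - {j}. (c(j := c j - 1)) i)"
      using that by (intro sum.remove) auto
    also have "(\<Sum>i\<in>{..<n} - {j}. (c(j := c j - 1)) i) = (\<Sum>i\<in>{..<n} - {j}. c i)"
      by (intro sum.cong) auto
    finally have 1: "(\<Sum>i<n. (c(j := c j - 1)) i) = (c j - 1) + (\<Sum>i\<in>{..<n} - {j}. c i)" by simp
    have "F = c j + (\<Sum>i\<in>{..<n} - {j}. c i)"
      using that unfolding F_def by (intro sum.remove) auto
    then show ?thesis using 1 that by simp
  qed
  have ex: "\<forall>j. \<exists>h. (j < n \<and> c j \<ge> 1) \<longrightarrow>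
      (\<forall>e\<in>E. h e < n) \<and> (\<forall>i<n. card {e\<in>E. h e = i} \<le> (c(j := c j - 1)) i) \<and>
      (\<Sum>e\<in>E. \<Sum>i<n. real ((c(j := c j - 1)) i) * u i e) \<le> real (\<Sum>i<n. (c(j := c j - 1)) i) * (\<Sum>e\<in>E. u (h e) e)"
  proof
    fix j
    show "\<exists>h. (j < n \<and> c j \<ge> 1) \<longrightarrow>
      (\<forall>e\<in>E. h e < n) \<and> (\<forall>i<n. card {e\<in>E. h e = i} \<le> (c(j := c j - 1)) i) \<and>
      (\<Sum>e\<in>E. \<Sum>i<n. real ((c(j := c j - 1)) i) * u i e) \<le> real (\<Sum>i<n. (c(j := c j - 1)) i) * (\<Sum>e\<in>E. u (h e) e)"
    proof (cases "j < n \<and> c j \<ge> 1")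
      case True
      have "(\<Sum>i<n. (c(j := c j - 1)) i) = F - 1" using sumupd True by blast
      then have "card E \<le> (\<Sum>i<n. (c(j := c j - 1)) i)" using F1 by simp
      then show ?thesis using insert.IH[of "c(j := c j - 1)"] by blast
    next
      case False
      then show ?thesis by blast
    qed
  qed
  from choice[OF ex] obtain H where H0: "\<forall>j. (j < n \<and> c j \<ge> 1) \<longrightarrow>
      (\<forall>e\<in>E. H j e < n) \<and> (\<forall>i<n. card {e\<in>E. H j e = i} \<le> (c(j := c j - 1)) i) \<and>
      (\<Sum>e\<in>E. \<Sum>i<n. real ((c(j := c j - 1)) i) * u i e) \<le> real (\<Sum>i<n. (c(j := c j - 1)) i) * (\<Sum>e\<in>E. u (H j e) e)"
    by (elim exE) (rule that)
  have H: "(\<forall>e\<in>E. H j e < n) \<and> (\<forall>i<n. card {e\<in>E. H j e = i} \<le> (c(j := c j - 1)) i) \<and>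
      (\<Sum>e\<in>E. \<Sum>i<n. real ((c(j := c j - 1)) i) * u i e) \<le> real (\<Sum>i<n. (c(j := c j - 1)) i) * (\<Sum>e\<in>E. u (H j e) e)"
    if "j < n" "c j \<ge> 1" for j
    using H0 that by blast
  define val where "val j = (\<Sum>e\<in>E. u (H j e) e)" for j
  have inner: "(\<Sum>i<n. real ((c(j := c j - 1)) i) * u i e) = (\<Sum>i<n. real (c i) * u i e) - u j e"
    if "j < n" "c j \<ge> 1" for j e
  proof -
    have "(\<Sum>i<n. real ((c(j := c j - 1)) i) * u i e) = real ((c(j := c j - 1)) j) * u j e + (\<Sum>i\<in>{..<n} - {j}. real ((c(j := c j - 1)) i) * u i e)"
      using that by (intro sum.remove) auto
    also have "(\<Sum>i\<in>{..<n} - {j}. real ((c(j := c j - 1)) i) * u i e) = (\<Sum>i\<in>{..<n} - {j}. real (c i) * u i e)"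
      by (intro sum.cong) auto
    finally have 1: "(\<Sum>i<n. real ((c(j := c j - 1)) i) * u i e) = real (c j - 1) * u j e + (\<Sum>i\<in>{..<n} - {j}. real (c i) * u i e)" by simp
    have 2: "(\<Sum>i<n. real (c i) * u i e) = real (c j) * u j e + (\<Sum>i\<in>{..<n} - {j}. real (c i) * u i e)"
      using that by (intro sum.remove) auto
    have "real (c j - 1) = real (c j) - 1" using that by simp
    then show ?thesis using 1 2 by (simp add: algebra_simps)
  qed
  have IHj: "X - (\<Sum>e\<in>E. u j e) \<le> real (F - 1) * val j" if "j < n" "c j \<ge> 1" for j
  proof -
    have eqn: "(\<Sum>e\<in>E. \<Sum>i<n. real ((c(j := c j - 1)) i) * u i e) = X - (\<Sum>e\<in>E. u j e)"
      unfolding X_def using inner[OF that] by (simp add: sum_subtractf)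
    have 1: "(\<Sum>e\<in>E. \<Sum>i<n. real ((c(j := c j - 1)) i) * u i e) \<le> real (\<Sum>i<n. (c(j := c j - 1)) i) * val j"
      using H[OF that] unfolding val_def by blast
    then have "(\<Sum>e\<in>E. \<Sum>i<n. real ((c(j := c j - 1)) i) * u i e) \<le> real (F - 1) * val j"
      by (simp only: sumupd[OF that])
    then show ?thesis using eqn by linarith
  qed
  have Fpos: "real F > 0" using F1 by simp
  have avg: "X \<le> (\<Sum>j<n. real (c j) * val j)"
  proof (cases "F = 1")
    case True
    then have "E = {}" using F1 insert.hyps by simp
    then show ?thesis by (simp add: X_def val_def)
  next
    case False
    then have F2: "real F - 1 > 0" using F1 by simp
    have "(\<Sum>j<n. real (c j) * (X - (\<Sum>e\<in>E. u j e))) \<le> (\<Sum>j<n. real (c j) * (real (F - 1) * val j))"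
    proof (rule sum_mono)
      fix j assume j: "j \<in> {..<n}"
      show "real (c j) * (X - (\<Sum>e\<in>E. u j e)) \<le> real (c j) * (real (F - 1) * val j)"
      proof (cases "c j \<ge> 1")
        case True
        then show ?thesis using IHj[of j] j by (intro mult_left_mono) auto
      next
        case False
        then have "c j = 0" by simp
        then show ?thesis by simp
      qed
    qed
    moreover have "(\<Sum>j<n. real (c j) * (X - (\<Sum>e\<in>E. u j e))) = real F * X - X"
    proof -
      have "(\<Sum>j<n. real (c j) * (X - (\<Sum>e\<in>E. u j e))) = (\<Sum>j<n. real (c j)) * X - (\<Sum>j<n. \<Sum>e\<in>E. real (c j) * u j e)"
        by (simp add: algebra_simps sum_subtractf sum_distrib_left sum_distrib_right)
      also have "(\<Sum>j<n. \<Sum>e\<in>E. real (c j) * u j e) = X" unfolding X_def by (rule sum.swap)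
      also have "(\<Sum>j<n. real (c j)) = real F" unfolding F_def by simp
      finally show ?thesis .
    qed
    moreover have "(\<Sum>j<n. real (c j) * (real (F - 1) * val j)) = (real F - 1) * (\<Sum>j<n. real (c j) * val j)"
      using F1 by (simp add: sum_distrib_left algebra_simps of_nat_diff)
    ultimately have "(real F - 1) * X \<le> (real F - 1) * (\<Sum>j<n. real (c j) * val j)"
      by (simp add: algebra_simps)
    then show ?thesis using F2 by (simp add: mult_le_cancel_left_pos)
  qed
  define tot where "tot = (\<Sum>i<n. real (c i) * u i x) + X"
  define g where "g j = u j x + val j" for j
  have "(\<Sum>j<n. real (c j)) * (tot / real F) \<le> (\<Sum>j<n. real (c j) * g j)"
  proof -
    have e1: "(\<Sum>j<n. real (c j) * g j) = (\<Sum>j<n. real (c j) * u j x) + (\<Sum>j<n. real (c j) * val j)"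
      unfolding g_def by (simp add: algebra_simps sum.distrib)
    have e2: "(\<Sum>j<n. real (c j)) = real F" unfolding F_def by simp
    have e3: "real F * (tot / real F) = tot" using Fpos by simp
    show ?thesis unfolding e1 e2 e3 using avg unfolding tot_def by linarith
  qed
  moreover have "(\<Sum>j<n. real (c j)) > 0" using Fpos unfolding F_def by simp
  ultimately obtain j where j: "j < n" "real (c j) > 0" "tot / real F \<le> g j"
    using wavg[of "{..<n}" "\<lambda>j. real (c j)" "tot / real F" g] by auto
  have cj: "c j \<ge> 1" using j by simp
  define h where "h = (H j)(x := j)"
  have Hj: "\<forall>e\<in>E. H j e < n" "\<forall>i<n. card {e\<in>E. H j e = i} \<le> (c(j := c j - 1)) i"
    using H[OF j(1) cj] by auto
  have hE: "\<forall>e\<in>E. h e = H j e" using insert.hyps unfolding h_def by auto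
  show ?case
  proof (intro exI[of _ h] conjI)
    show "\<forall>e\<in>insert x E. h e < n" using hE Hj j by (auto simp: h_def)
    show "\<forall>i<n. card {e \<in> insert x E. h e = i} \<le> c i"
    proof (intro allI impI)
      fix i assume i: "i < n"
      show "card {e \<in> insert x E. h e = i} \<le> c i"
      proof (cases "i = j")
        case True
        have "{e \<in> insert x E. h e = i} = insert x {e\<in>E. H j e = i}"
          using hE True by (auto simp: h_def)
        moreover have "card (insert x {e\<in>E. H j e = i}) \<le> Suc (card {e\<in>E. H j e = i})"
          using insert.hyps by (simp add: card_insert_le_m1)
        moreover have "card {e\<in>E. H j e = j} \<le> (c(j := c j - 1)) j" using Hj(2) j(1) by blast
        then have "card {e\<in>E. H j e = i} \<le> c j - 1" using True by simp
        ultimately show ?thesis using True cj by simp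
      next
        case False
        have "{e \<in> insert x E. h e = i} = {e\<in>E. H j e = i}"
          using hE False by (auto simp: h_def)
        moreover have "card {e\<in>E. H j e = i} \<le> (c(j := c j - 1)) i" using Hj(2) i by blast
        then have "card {e\<in>E. H j e = i} \<le> c i" using False by simp
        ultimately show ?thesis by simp
      qed
    qed
    have "(\<Sum>e\<in>insert x E. u (h e) e) = u j x + val j"
      using insert.hyps hE unfolding val_def by (simp add: h_def)
    moreover have "(\<Sum>e\<in>insert x E. \<Sum>i<n. real (c i) * u i e) = tot"
      using insert.hyps unfolding tot_def X_def by simp
    moreover have "tot \<le> real F * g j" using j(3) Fpos by (simp add: divide_le_eq mult.commute)
    ultimately show "(\<Sum>e\<in>insert x E. \<Sum>i<n. real (c i) * u i e) \<le> real (\<Sum>j<n. c j) * (\<Sum>e\<in>insert x E. u (h e) e)"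
      unfolding F_def g_def by simp
  qed
qed




lemma usw_set_finite: "finite {USW n u A | A. is_allocation n m A}"
proof -
  have "{USW n u A | A. is_allocation n m A} \<subseteq>
        (\<lambda>B. \<Sum>i<n. util u i (B i)) ` ({..<n} \<rightarrow>\<^sub>E Pow {..<m})"
  proof
    fix x assume "x \<in> {USW n u A | A. is_allocation n m A}"
    then obtain A where x: "x = USW n u A" and A: "is_allocation n m A" by blast
    have "restrict A {..<n} \<in> {..<n} \<rightarrow>\<^sub>E Pow {..<m}" using A by (auto simp: is_allocation_def)
    moreover have "x = (\<Sum>i<n. util u i (restrict A {..<n} i))" unfolding x USW_def by simp
    ultimately show "x \<in> (\<lambda>B. \<Sum>i<n. util u i (B i)) ` ({..<n} \<rightarrow>\<^sub>E Pow {..<m})" by blast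
  qed
  moreover have "finite ({..<n} \<rightarrow>\<^sub>E Pow {..<m})" by (intro finite_PiE) auto
  ultimately show ?thesis by (meson finite_imageI finite_subset)
qed

lemma usw_card_set_finite: "finite {USW n u A | A. is_cardinal n m k A}"
  by (rule finite_subset[OF _ usw_set_finite[of n u m]]) (auto simp: is_cardinal_def)

lemma usw_le:
  assumes A: "is_allocation n m A" and le: "\<forall>i<n. \<forall>g<m. u i g \<le> wv g"
  shows "USW n u A \<le> (\<Sum>g<m. wv g)"
proof -
  have sub: "\<forall>i<n. A i \<subseteq> {..<m}" using A by (simp add: is_allocation_def)
  have "USW n u A = (\<Sum>i<n. \<Sum>g\<in>A i. u i g)" by (simp add: USW_def util_def)
  also have "\<dots> \<le> (\<Sum>i<n. \<Sum>g\<in>A i. wv g)"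
    using sub le by (intro sum_mono) auto
  also have "\<dots> = sum wv (\<Union>(A ` {..<n}))"
    using A sub by (subst sum.UNION_disjoint) (auto simp: is_allocation_def intro: finite_subset)
  also have "\<Union>(A ` {..<n}) = {..<m}" using A by (simp add: is_allocation_def)
  finally show ?thesis by simp
qed

lemma alloc0: "0 < n \<Longrightarrow> is_allocation n m (\<lambda>i. if i = 0 then {..<m} else {})"
  unfolding is_allocation_def by auto

lemma opt_le:
  assumes "0 < n" "\<forall>i<n. \<forall>g<m. u i g \<le> wv g"
  shows "OPT_USW n m u \<le> (\<Sum>g<m. wv g)"
  unfolding OPT_USW_def
  using usw_set_finite[of n u m] alloc0[OF assms(1), of m] usw_le[OF _ assms(2)]
  by (subst Max_le_iff) auto

lemma opt_ge: "is_allocation n m A \<Longrightarrow> USW n u A \<le> OPT_USW n m u"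
  unfolding OPT_USW_def using usw_set_finite[of n u m] by (intro Max_ge) auto

lemma fun_alloc:
  assumes "\<forall>g<m. f g < n"
  shows "is_allocation n m (\<lambda>i. {g. g < m \<and> f g = i})"
    and "USW n u (\<lambda>i. {g. g < m \<and> f g = i}) = (\<Sum>g<m. u (f g) g)"
proof -
  show "is_allocation n m (\<lambda>i. {g. g < m \<and> f g = i})"
    using assms unfolding is_allocation_def by auto
  have "USW n u (\<lambda>i. {g. g < m \<and> f g = i}) = (\<Sum>i<n. \<Sum>g\<in>{g. g \<in> {..<m} \<and> f g = i}. u (f g) g)"
    unfolding USW_def util_def by (intro sum.cong) auto
  also have "\<dots> = (\<Sum>g<m. u (f g) g)"
    using assms by (intro sum.group) auto
  finally show "USW n u (\<lambda>i. {g. g < m \<and> f g = i}) = (\<Sum>g<m. u (f g) g)" .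
qed

lemma card_ge:
  assumes "\<forall>g<m. f g < n" "\<forall>i<n. card {g. g < m \<and> f g = i} \<le> k"
  shows "(\<Sum>g<m. u (f g) g) \<le> MAX_CARD_USW n m k u"
proof -
  have "is_cardinal n m k (\<lambda>i. {g. g < m \<and> f g = i})"
    using fun_alloc(1)[OF assms(1)] assms(2) by (simp add: is_cardinal_def)
  then have "USW n u (\<lambda>i. {g. g < m \<and> f g = i}) \<in> {USW n u A | A. is_cardinal n m k A}" by blast
  then have "USW n u (\<lambda>i. {g. g < m \<and> f g = i}) \<le> MAX_CARD_USW n m k u"
    unfolding MAX_CARD_USW_def using usw_card_set_finite[of n u m k] by (intro Max_ge)
  then show ?thesis using fun_alloc(2)[OF assms(1), of u] by simp
qed

lemma card_le:
  assumes "is_cardinal n m k A0" "\<forall>A. is_cardinal n m k A \<longrightarrow> USW n u A \<le> x"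
  shows "MAX_CARD_USW n m k u \<le> x"
  unfolding MAX_CARD_USW_def
  using usw_card_set_finite[of n u m k] assms by (subst Max_le_iff) auto




lemma rho_facts:
  assumes k0: "0 < k" and m0: "0 < m"
  shows "poc_bound m k \<ge> 1" and "4 * poc_bound m k * (poc_bound m k - 1) * real k = real m - 1"
proof -
  define s where "s = sqrt (1 + (real m - 1) / real k)"
  have nn: "1 + (real m - 1) / real k \<ge> 1" using k0 m0 by simp
  have s1: "s \<ge> 1" unfolding s_def using nn by simp
  have s2: "s^2 = 1 + (real m - 1) / real k" unfolding s_def using nn by simp
  have r: "poc_bound m k = (1 + s) / 2" unfolding poc_bound_def s_def by simp
  show "poc_bound m k \<ge> 1" using r s1 by simp
  have "4 * poc_bound m k * (poc_bound m k - 1) = (1+s)*(s-1)" unfolding r by (simp add: field_simps)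
  also have "\<dots> = s^2 - 1" by (simp add: power2_eq_square algebra_simps)
  also have "\<dots> = (real m - 1) / real k" using s2 by simp
  finally show "4 * poc_bound m k * (poc_bound m k - 1) * real k = real m - 1" using k0 by simp
qed

lemma part_group:
  fixes ow :: "nat \<Rightarrow> nat" and \<phi> :: "nat \<Rightarrow> 'a::comm_monoid_add"
  assumes "\<forall>g<m. ow g < n"
  shows "(\<Sum>j<n. \<Sum>g\<in>{g. g < m \<and> ow g = j}. \<phi> g) = (\<Sum>g<m. \<phi> g)"
proof -
  have "(\<Sum>j<n. \<Sum>g\<in>{g. g < m \<and> ow g = j}. \<phi> g) = (\<Sum>j<n. \<Sum>g\<in>{g. g \<in> {..<m} \<and> ow g = j}. \<phi> g)"
    by simp
  also have "\<dots> = (\<Sum>g<m. \<phi> g)" using assms by (intro sum.group) auto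
  finally show ?thesis .
qed




lemma part1:
  fixes u :: "nat \<Rightarrow> nat \<Rightarrow> real"
  assumes n0: "0 < n" and m0: "0 < m" and k0: "0 < k" and mk: "m \<le> k * n"
    and V: "valid_instance n m u"
  shows "OPT_USW n m u / MAX_CARD_USW n m k u \<le> poc_bound m k"
proof -
  have u0: "\<And>i g. i < n \<Longrightarrow> g < m \<Longrightarrow> u i g \<ge> 0" using V by (simp add: valid_instance_def)
  have u1: "\<And>i. i < n \<Longrightarrow> (\<Sum>g<m. u i g) = 1" using V by (simp add: valid_instance_def)
  define \<rho> where "\<rho> = poc_bound m k"
  have r1: "\<rho> \<ge> 1" and r2: "4 * \<rho> * (\<rho> - 1) * real k = real m - 1"
    using rho_facts[OF k0 m0] unfolding \<rho>_def by auto
  define ow where "ow g = arg_min_on (\<lambda>i. - u i g) {..<n}" for g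
  have ow_lt: "ow g < n" for g
    using arg_min_if_finite(1)[of "{..<n}" "\<lambda>i. - u i g"] n0 unfolding ow_def by auto
  have ow_max: "u j g \<le> u (ow g) g" if "j < n" for j g
  proof -
    have "\<not>(\<exists>x\<in>{..<n}. - u x g < - u (ow g) g)"
      unfolding ow_def by (rule arg_min_if_finite(2)) (use n0 in auto)
    then show ?thesis using that by force
  qed
  define wv where "wv g = u (ow g) g" for g
  define W where "W = (\<Sum>g<m. wv g)"
  have optW: "OPT_USW n m u \<le> W"
    unfolding W_def wv_def using opt_le[OF n0, of m u "\<lambda>g. u (ow g) g"] ow_max by auto
  have W1: "W \<ge> 1"
  proof -
    have "(\<Sum>g<m. u 0 g) \<le> W" unfolding W_def wv_def using ow_max n0 by (intro sum_mono) auto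
    then show ?thesis using u1[OF n0] by simp
  qed
  define Bs where "Bs j = {g. g < m \<and> ow g = j}" for j
  define b where "b j = card (Bs j)" for j
  have finB: "finite (Bs j)" for j unfolding Bs_def by simp
  have grp: "(\<Sum>j<n. \<Sum>g\<in>Bs j. \<phi> g) = (\<Sum>g<m. \<phi> g)" for \<phi> :: "nat \<Rightarrow> real"
    unfolding Bs_def using part_group[of m ow n \<phi>] ow_lt by simp
  have sumb: "(\<Sum>j<n. b j) = m"
  proof -
    have "(\<Sum>j<n. \<Sum>g\<in>Bs j. (1::nat)) = (\<Sum>g<m. (1::nat))"
      unfolding Bs_def using part_group[of m ow n "\<lambda>_. 1::nat"] ow_lt by simp
    then show ?thesis unfolding b_def by simp
  qed
  define cap where "cap j = k - min (b j) k" for j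
  define F where "F = (\<Sum>j<n. cap j)"
  define \<nu> where "\<nu> g = (\<Sum>j<n. real (cap j) * u j g) / real F" for g
  have exK: "\<forall>j. \<exists>K. K \<subseteq> Bs j \<and> card K = min (b j) k \<and>
      real (min (b j) k) * (\<Sum>g\<in>Bs j. u j g - \<nu> g) \<le> real (b j) * (\<Sum>g\<in>K. u j g - \<nu> g)"
  proof
    fix j
    show "\<exists>K. K \<subseteq> Bs j \<and> card K = min (b j) k \<and>
      real (min (b j) k) * (\<Sum>g\<in>Bs j. u j g - \<nu> g) \<le> real (b j) * (\<Sum>g\<in>K. u j g - \<nu> g)"
      using topk[OF finB, of "min (b j) k" j "\<lambda>g. u j g - \<nu> g"] unfolding b_def by auto
  qed
  from choice[OF exK] obtain K where K: "\<forall>j. K j \<subseteq> Bs j \<and> card (K j) = min (b j) k \<and>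
      real (min (b j) k) * (\<Sum>g\<in>Bs j. u j g - \<nu> g) \<le> real (b j) * (\<Sum>g\<in>K j. u j g - \<nu> g)"
    by (elim exE) (rule that)
  have KB: "K j \<subseteq> Bs j" for j using K by blast
  have cK: "card (K j) = min (b j) k" for j using K by blast
  have Kineq: "real (min (b j) k) * (\<Sum>g\<in>Bs j. u j g - \<nu> g) \<le> real (b j) * (\<Sum>g\<in>K j. u j g - \<nu> g)" for j
    using K by blast
  have finK: "finite (K j)" for j using KB finB finite_subset by blast
  define KK where "KK = (\<Union>j\<in>{..<n}. K j)"
  define E where "E = {..<m} - KK"
  have KKsub: "KK \<subseteq> {..<m}" unfolding KK_def using KB by (auto simp: Bs_def)
  have Kdisj: "\<forall>i\<in>{..<n}. \<forall>j\<in>{..<n}. i \<noteq> j \<longrightarrow> K i \<inter> K j = {}"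
  proof (intro ballI impI)
    fix i j :: nat assume "i \<noteq> j"
    have "Bs i \<inter> Bs j = {}" using \<open>i \<noteq> j\<close> by (auto simp: Bs_def)
    then show "K i \<inter> K j = {}" using KB[of i] KB[of j] by blast
  qed
  have cardKK: "card KK = (\<Sum>j<n. card (K j))"
    unfolding KK_def using finK Kdisj by (subst card_UN_disjoint) auto
  have capsum: "F = k * n - card KK"
  proof -
    have "F = (\<Sum>j<n. k) - (\<Sum>j<n. min (b j) k)"
      unfolding F_def cap_def by (rule sum_subtractf_nat) auto
    then show ?thesis using cardKK cK by (simp add: mult.commute)
  qed
  have finE: "finite E" unfolding E_def by simp
  have cardE: "card E = m - card KK" unfolding E_def using KKsub
    by (simp add: card_Diff_subset finite_subset)
  have EF: "card E \<le> F" using cardE capsum mk by simp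
  obtain h where hlt: "\<forall>e\<in>E. h e < n" and hcap: "\<forall>j<n. card {e\<in>E. h e = j} \<le> cap j"
    and hval: "(\<Sum>e\<in>E. \<Sum>j<n. real (cap j) * u j e) \<le> real F * (\<Sum>e\<in>E. u (h e) e)"
    using assign[OF finE, where n=n and c=cap and u=u] EF unfolding F_def by blast
  define f where "f g = (if g \<in> KK then ow g else h g)" for g
  have flt: "\<forall>g<m. f g < n" unfolding f_def using hlt ow_lt by (auto simp: E_def)
  have fcard: "\<forall>i<n. card {g. g < m \<and> f g = i} \<le> k"
  proof (intro allI impI)
    fix i assume i: "i < n"
    have "{g. g < m \<and> f g = i} \<subseteq> K i \<union> {e\<in>E. h e = i}"
    proof
      fix g assume g: "g \<in> {g. g < m \<and> f g = i}"
      show "g \<in> K i \<union> {e\<in>E. h e = i}"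
      proof (cases "g \<in> KK")
        case True
        then obtain j where j: "j < n" "g \<in> K j" unfolding KK_def by blast
        then have "ow g = j" using KB by (auto simp: Bs_def)
        then have "j = i" using g True by (simp add: f_def)
        then show ?thesis using j by simp
      next
        case False
        then show ?thesis using g by (auto simp: f_def E_def)
      qed
    qed
    then have "card {g. g < m \<and> f g = i} \<le> card (K i \<union> {e\<in>E. h e = i})"
      using finK finE by (intro card_mono) auto
    also have "\<dots> \<le> card (K i) + card {e\<in>E. h e = i}" by (rule card_Un_le)
    also have "\<dots> \<le> min (b i) k + cap i" using cK hcap i by (simp add: add_mono)
    also have "\<dots> = k" unfolding cap_def by simp
    finally show "card {g. g < m \<and> f g = i} \<le> k" .
  qed
  define val where "val = (\<Sum>g<m. u (f g) g)"
  have Cval: "val \<le> MAX_CARD_USW n m k u" unfolding val_def by (rule card_ge[OF flt fcard])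
  have valsplit: "val = (\<Sum>g\<in>KK. wv g) + (\<Sum>e\<in>E. u (h e) e)"
  proof -
    have "val = (\<Sum>g\<in>KK. u (f g) g) + (\<Sum>g\<in>E. u (f g) g)"
      unfolding val_def E_def using sum.subset_diff[OF KKsub, of "\<lambda>g. u (f g) g"] by simp
    moreover have "(\<Sum>g\<in>KK. u (f g) g) = (\<Sum>g\<in>KK. wv g)" by (intro sum.cong) (auto simp: f_def wv_def)
    moreover have "(\<Sum>g\<in>E. u (f g) g) = (\<Sum>e\<in>E. u (h e) e)" by (intro sum.cong) (auto simp: f_def E_def)
    ultimately show ?thesis by simp
  qed
  have main: "W \<le> \<rho> * val"
  proof (cases "F = 0")
    case True
    then have "E = {}" using EF finE by simp
    then have "KK = {..<m}" using KKsub unfolding E_def by auto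
    then have "val = W" using valsplit \<open>E = {}\<close> unfolding W_def by simp
    then show ?thesis using r1 W1 mult_right_mono[OF r1, of W] by simp
  next
    case False
    then have Fp: "real F > 0" by simp
    have nu0: "\<nu> g \<ge> 0" if "g < m" for g
      unfolding \<nu>_def using u0 that by (intro divide_nonneg_pos sum_nonneg mult_nonneg_nonneg Fp) auto
    have nuw: "\<nu> g \<le> wv g" if "g < m" for g
    proof -
      have "(\<Sum>j<n. real (cap j) * u j g) \<le> (\<Sum>j<n. real (cap j) * wv g)"
        unfolding wv_def using ow_max by (intro sum_mono mult_left_mono) auto
      also have "\<dots> = real F * wv g" unfolding F_def by (simp add: sum_distrib_right)
      finally show ?thesis unfolding \<nu>_def using Fp by (simp add: divide_le_eq mult.commute)
    qed
    have nusum: "(\<Sum>g<m. \<nu> g) = 1"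
    proof -
      have "(\<Sum>g<m. \<nu> g) = (\<Sum>g<m. \<Sum>j<n. real (cap j) * u j g) / real F"
        unfolding \<nu>_def by (simp add: sum_divide_distrib)
      also have "(\<Sum>g<m. \<Sum>j<n. real (cap j) * u j g) = (\<Sum>j<n. real (cap j) * (\<Sum>g<m. u j g))"
        by (subst sum.swap) (simp add: sum_distrib_left)
      also have "\<dots> = (\<Sum>j<n. real (cap j))" using u1 by simp
      also have "\<dots> = real F" unfolding F_def by simp
      finally show ?thesis using Fp by simp
    qed
    have Enu: "(\<Sum>e\<in>E. \<nu> e) \<le> (\<Sum>e\<in>E. u (h e) e)"
    proof -
      have "(\<Sum>e\<in>E. \<nu> e) = (\<Sum>e\<in>E. \<Sum>j<n. real (cap j) * u j e) / real F"
        unfolding \<nu>_def by (simp add: sum_divide_distrib)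
      then show ?thesis using hval Fp by (simp add: divide_le_eq mult.commute)
    qed
    have Esum: "(\<Sum>e\<in>E. \<nu> e) = 1 - (\<Sum>g\<in>KK. \<nu> g)"
      using sum.subset_diff[OF KKsub, of \<nu>] nusum unfolding E_def by simp
    have KKsum: "(\<Sum>g\<in>KK. wv g - \<nu> g) = (\<Sum>j<n. \<Sum>g\<in>K j. u j g - \<nu> g)"
    proof -
      have "(\<Sum>g\<in>KK. wv g - \<nu> g) = (\<Sum>j<n. \<Sum>g\<in>K j. wv g - \<nu> g)"
        unfolding KK_def using finK Kdisj by (subst sum.UNION_disjoint) auto
      also have "\<dots> = (\<Sum>j<n. \<Sum>g\<in>K j. u j g - \<nu> g)"
      proof (intro sum.cong refl)
        fix j g assume "g \<in> K j"
        then have "ow g = j" using KB by (auto simp: Bs_def)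
        then show "wv g - \<nu> g = u j g - \<nu> g" by (simp add: wv_def)
      qed
      finally show ?thesis .
    qed
    define w where "w j = (\<Sum>g\<in>Bs j. u j g)" for j
    define v where "v j = (\<Sum>g\<in>Bs j. \<nu> g)" for j
    define \<alpha> where "\<alpha> j = (if b j \<le> k then 1 else real k / real (b j))" for j
    have BSsub: "(\<Sum>g\<in>Bs j. u j g - \<nu> g) = w j - v j" for j
      unfolding w_def v_def by (simp add: sum_subtractf)
    have Kj: "\<alpha> j * (w j - v j) \<le> (\<Sum>g\<in>K j. u j g - \<nu> g)" for j
    proof (cases "b j \<le> k")
      case True
      show ?thesis
      proof (cases "b j = 0")
        case True
        then have "Bs j = {}" using finB unfolding b_def by simp
        then have "K j = {}" using KB by blast
        then show ?thesis using \<open>Bs j = {}\<close> unfolding w_def v_def \<alpha>_def by simp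
      next
        case False
        then have bp: "real (b j) > 0" by simp
        have "real (b j) * (w j - v j) \<le> real (b j) * (\<Sum>g\<in>K j. u j g - \<nu> g)"
          using Kineq[of j] True BSsub[of j] by (simp add: min_def)
        then show ?thesis using bp True unfolding \<alpha>_def by (simp add: mult_le_cancel_left_pos)
      qed
    next
      case False
      then have bp: "real (b j) > 0" by simp
      have "real k * (w j - v j) \<le> real (b j) * (\<Sum>g\<in>K j. u j g - \<nu> g)"
        using Kineq[of j] False BSsub[of j] by (simp add: min_def)
      then have "real k * (w j - v j) / real (b j) \<le> (\<Sum>g\<in>K j. u j g - \<nu> g)"
        using bp by (simp add: divide_le_eq mult.commute)
      then show ?thesis using False unfolding \<alpha>_def by simp
    qed
    have LB: "1 + (\<Sum>j<n. \<alpha> j * (w j - v j)) \<le> val"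
    proof -
      have "1 + (\<Sum>j<n. \<alpha> j * (w j - v j)) \<le> 1 + (\<Sum>j<n. \<Sum>g\<in>K j. u j g - \<nu> g)"
        using Kj by (simp add: sum_mono)
      also have "\<dots> = 1 + (\<Sum>g\<in>KK. wv g - \<nu> g)" using KKsum by simp
      also have "\<dots> = (\<Sum>g\<in>KK. wv g) + (\<Sum>e\<in>E. \<nu> e)" using Esum by (simp add: sum_subtractf)
      also have "\<dots> \<le> val" using valsplit Enu by simp
      finally show ?thesis .
    qed
    define \<delta> where "\<delta> = 1 / (4 * \<rho> * real k)"
    have agent: "w j - \<rho> * (\<alpha> j * w j + (1 - \<alpha> j) * v j) \<le> real (b j) / (4 * \<rho> * real k) - (\<rho> - 1 + \<delta>) * v j"
      if j: "j < n" for j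
    proof -
      have v0: "0 \<le> v j" unfolding v_def using nu0 by (intro sum_nonneg) (auto simp: Bs_def)
      have vw: "v j \<le> w j" unfolding v_def w_def using nuw
        by (intro sum_mono) (auto simp: Bs_def wv_def)
      have w1: "w j \<le> 1"
      proof -
        have "w j \<le> (\<Sum>g<m. u j g)" unfolding w_def using u0 j
          by (intro sum_mono2) (auto simp: Bs_def)
        then show ?thesis using u1 j by simp
      qed
      have b0: "b j = 0 \<Longrightarrow> w j = 0" using finB unfolding b_def w_def by simp
      show ?thesis using agent_ineq[OF r1 _ v0 vw w1 b0, of k] k0 unfolding \<alpha>_def \<delta>_def by simp
    qed
    have "(\<Sum>j<n. w j - \<rho> * (\<alpha> j * w j + (1 - \<alpha> j) * v j)) \<le> (\<Sum>j<n. real (b j) / (4 * \<rho> * real k) - (\<rho> - 1 + \<delta>) * v j)"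
      using agent by (intro sum_mono) auto
    moreover have "(\<Sum>j<n. w j) = W"
    proof -
      have "(\<Sum>j<n. w j) = (\<Sum>j<n. \<Sum>g\<in>Bs j. wv g)" unfolding w_def
        by (intro sum.cong refl) (auto simp: Bs_def wv_def)
      then show ?thesis using grp[of wv] unfolding W_def by simp
    qed
    moreover have vs: "(\<Sum>j<n. v j) = 1" unfolding v_def using grp[of \<nu>] nusum by simp
    moreover have "(\<Sum>j<n. real (b j) / (4 * \<rho> * real k) - (\<rho> - 1 + \<delta>) * v j) = real m / (4 * \<rho> * real k) - (\<rho> - 1 + \<delta>)"
    proof -
      have "(\<Sum>j<n. real (b j) / (4 * \<rho> * real k)) = real m / (4 * \<rho> * real k)"
      proof -
        have "(\<Sum>j<n. real (b j)) = real m" using sumb by (metis of_nat_sum)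
        then show ?thesis by (simp add: sum_divide_distrib[symmetric])
      qed
      then show ?thesis using vs by (simp add: sum_subtractf sum_distrib_left[symmetric])
    qed
    moreover have "real m / (4 * \<rho> * real k) - (\<rho> - 1 + \<delta>) = 0"
    proof -
      have pos: "4 * \<rho> * real k > 0" using r1 k0 by simp
      have "real m / (4 * \<rho> * real k) - \<delta> = (real m - 1) / (4 * \<rho> * real k)"
        unfolding \<delta>_def by (simp add: diff_divide_distrib)
      also have "\<dots> = \<rho> - 1"
      proof -
        have "real m - 1 = (\<rho> - 1) * (4 * \<rho> * real k)" using r2 by (simp add: algebra_simps)
        then show ?thesis using pos r1 k0 by simp
      qed
      finally show ?thesis by simp
    qed
    moreover have "(\<Sum>j<n. w j - \<rho> * (\<alpha> j * w j + (1 - \<alpha> j) * v j))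
        = (\<Sum>j<n. w j) - \<rho> * ((\<Sum>j<n. \<alpha> j * (w j - v j)) + (\<Sum>j<n. v j))"
      by (simp add: sum_subtractf sum_distrib_left sum.distrib algebra_simps)
    ultimately have "W \<le> \<rho> * (1 + (\<Sum>j<n. \<alpha> j * (w j - v j)))" by (simp add: add.commute)
    also have "\<dots> \<le> \<rho> * val" using LB r1 by (intro mult_left_mono) auto
    finally show ?thesis .
  qed
  have Cge: "val \<le> MAX_CARD_USW n m k u" by (rule Cval)
  have Cpos: "MAX_CARD_USW n m k u > 0"
  proof -
    have "1 \<le> \<rho> * val" using main W1 by simp
    have "val > 0"
    proof (rule ccontr)
      assume "\<not> val > 0"
      then have "\<rho> * val \<le> 0" using r1 by (simp add: mult_nonneg_nonpos)
      then show False using \<open>1 \<le> \<rho> * val\<close> by simp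
    qed
    then show ?thesis using Cge by simp
  qed
  have "OPT_USW n m u \<le> \<rho> * MAX_CARD_USW n m k u"
  proof -
    have "\<rho> * val \<le> \<rho> * MAX_CARD_USW n m k u" using Cge r1 by (intro mult_left_mono) auto
    then show ?thesis using optW main by linarith
  qed
  then show ?thesis using Cpos unfolding \<rho>_def by (simp add: divide_le_eq mult.commute)
qed




lemma div_iff_nat: "0 < (p::nat) \<Longrightarrow> (g div p = i) \<longleftrightarrow> (i * p \<le> g \<and> g < i * p + p)"
proof
  assume p: "0 < p" and d: "g div p = i"
  have "g = i * p + g mod p" using d div_mult_mod_eq[of g p] by simp
  moreover have "g mod p < p" using p by simp
  ultimately show "i * p \<le> g \<and> g < i * p + p" by linarith
next
  assume p: "0 < p" and "i * p \<le> g \<and> g < i * p + p"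
  then show "g div p = i" by (intro div_nat_eqI) (auto simp: mult.commute)
qed

lemma block_card:
  assumes p: "0 < (p::nat)" and kp: "k \<le> p"
  shows "card {g. g < r * p \<and> g mod p < k} = r * k"
proof -
  have eq: "{g. g < r * p \<and> g mod p < k} = (\<lambda>(i,t). i * p + t) ` ({..<r} \<times> {..<k})"
  proof
    show "{g. g < r * p \<and> g mod p < k} \<subseteq> (\<lambda>(i,t). i * p + t) ` ({..<r} \<times> {..<k})"
    proof
      fix g assume g: "g \<in> {g. g < r * p \<and> g mod p < k}"
      have "g div p < r" using g p by (simp add: div_less_iff_less_mult)
      moreover have "g mod p < k" using g by simp
      ultimately have mem: "(g div p, g mod p) \<in> {..<r} \<times> {..<k}" by simp
      have "g = (\<lambda>(i,t). i * p + t) (g div p, g mod p)" by simp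
      then show "g \<in> (\<lambda>(i,t). i * p + t) ` ({..<r} \<times> {..<k})" using mem by (rule image_eqI)
    qed
  next
    show "(\<lambda>(i,t). i * p + t) ` ({..<r} \<times> {..<k}) \<subseteq> {g. g < r * p \<and> g mod p < k}"
    proof
      fix g assume "g \<in> (\<lambda>(i,t). i * p + t) ` ({..<r} \<times> {..<k})"
      then obtain i t where it: "i < r" "t < k" "g = i * p + t" by auto
      have "i * p + t < i * p + p" using it kp by simp
      also have "\<dots> = Suc i * p" by simp
      also have "\<dots> \<le> r * p" using it by (intro mult_right_mono) auto
      finally have "g < r * p" using it by simp
      moreover have "g mod p = t" using it(2) kp by (simp add: it(3))
      ultimately show "g \<in> {g. g < r * p \<and> g mod p < k}" using it by simp
    qed
  qed
  have inj: "inj_on (\<lambda>(i,t). i * p + t) ({..<r} \<times> {..<k})"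
  proof (rule inj_onI, clarify)
    fix i t i' t' assume "i < r" "t < k" "i' < r" "t' < k" and e: "i * p + t = i' * p + t'"
    have "(i * p + t) mod p = t" "(i' * p + t') mod p = t'" using \<open>t < k\<close> \<open>t' < k\<close> kp by simp_all
    then have tt: "t = t'" using e by simp
    then have "i * p = i' * p" using e by simp
    then show "i = i' \<and> t = t'" using p tt by simp
  qed
  show ?thesis unfolding eq using inj by (simp add: card_image)
qed




lemma part2:
  fixes k c m :: nat
  assumes k0: "0 < k" and c2: "2 \<le> c" and mdef: "m = k * (c^2 - 1) + 1"
  shows "\<exists>n (u :: nat \<Rightarrow> nat \<Rightarrow> real). 0 < n \<and> m \<le> k * n \<and> valid_instance n m u
                  \<and> OPT_USW n m u / MAX_CARD_USW n m k u = poc_bound m k"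
proof -
  define r where "r = c - 1"
  define p where "p = k * (c + 1)"
  define n where "n = m + c"
  have p0: "0 < p" using k0 by (simp add: p_def)
  have kp: "k \<le> p" by (simp add: p_def)
  have rc: "r + 1 = c" using c2 by (simp add: r_def)
  have rp: "r * p = m - 1"
  proof -
    obtain d where d: "c = Suc d" using c2 by (cases c) auto
    have "r * p = k * (d * (d + 2))" unfolding r_def p_def d by (simp add: algebra_simps)
    moreover have "c^2 - 1 = d * (d + 2)" unfolding d by (simp add: power2_eq_square algebra_simps)
    ultimately show ?thesis using mdef by simp
  qed
  have m1: "m \<ge> 1" using mdef by simp
  define u :: "nat \<Rightarrow> nat \<Rightarrow> real" where
    "u i g = (if i < r then (if g < m - 1 \<and> g div p = i then 1 / real p else 0) else (if g = m - 1 then 1 else 0))" for i g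
  have n0: "0 < n" unfolding n_def using c2 by simp
  have mkn: "m \<le> k * n"
  proof -
    have "m \<le> k * m" using k0 by simp
    also have "\<dots> \<le> k * n" unfolding n_def by simp
    finally show ?thesis .
  qed
  have divi: "g div p = i \<longleftrightarrow> i * p \<le> g \<and> g < i * p + p" for g i using div_iff_nat[OF p0] .
  have divr: "g div p < r" if "g < m - 1" for g
    using that rp p0 by (simp add: div_less_iff_less_mult)
  have valid: "valid_instance n m u"
    unfolding valid_instance_def
  proof (intro conjI allI impI)
    fix i g assume "i < n" "g < m"
    then show "0 \<le> u i g" unfolding u_def by simp
  next
    fix i assume i: "i < n"
    show "(\<Sum>g<m. u i g) = 1"
    proof (cases "i < r")
      case True
      have S: "{g \<in> {..<m}. g < m - 1 \<and> g div p = i} = {i*p..<i*p+p}"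
      proof -
        have "i * p + p \<le> r * p" using True by (metis add.commute mult_Suc Suc_le_eq mult_le_mono1)
        then show ?thesis using rp divi by auto
      qed
      have "(\<Sum>g<m. u i g) = (\<Sum>g<m. if g < m - 1 \<and> g div p = i then 1 / real p else 0)"
        unfolding u_def using True by simp
      also have "\<dots> = (\<Sum>g\<in>{g \<in> {..<m}. g < m - 1 \<and> g div p = i}. 1 / real p)"
        by (rule sum.inter_filter[symmetric]) simp
      also have "\<dots> = 1" unfolding S using p0 by simp
      finally show ?thesis .
    next
      case False
      have "(\<Sum>g<m. u i g) = (\<Sum>g<m. if g = m - 1 then 1 else 0)"
        unfolding u_def using False by simp
      also have "\<dots> = 1" using m1 by (subst sum.delta) auto
      finally show ?thesis .
    qed
  qed
  define M1 where "M1 = m - 1"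
  have mM: "m = Suc M1" using m1 unfolding M1_def by simp
  have rpM: "r * p = M1" using rp unfolding M1_def .
  define f0 where "f0 g = (if g < M1 then g div p else r)" for g
  have f0lt: "\<forall>g<m. f0 g < n"
  proof (intro allI impI)
    fix g assume "g < m"
    show "f0 g < n"
    proof (cases "g < M1")
      case True
      then have "g div p < r" using divr by (simp add: M1_def)
      then show ?thesis using rc True by (simp add: f0_def n_def)
    next
      case False
      then show ?thesis using rc by (simp add: f0_def n_def)
    qed
  qed
  have f0val: "(\<Sum>g<m. u (f0 g) g) = real r + 1"
  proof -
    have "(\<Sum>g<m. u (f0 g) g) = (\<Sum>g<Suc M1. if g < M1 then 1 / real p else 1)"
      unfolding mM by (intro sum.cong refl) (auto simp: u_def f0_def M1_def divr)
    also have "\<dots> = real M1 / real p + 1" by simp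
    also have "real M1 / real p = real r" using rpM p0 by (metis nonzero_mult_div_cancel_right of_nat_mult of_nat_0_less_iff less_irrefl)
    finally show ?thesis .
  qed
  have OPTeq: "OPT_USW n m u = real r + 1"
  proof (rule antisym)
    have "OPT_USW n m u \<le> (\<Sum>g<m. if g < M1 then 1 / real p else 1)"
      by (rule opt_le[OF n0]) (auto simp: u_def M1_def)
    also have "\<dots> = real r + 1"
    proof -
      have "(\<Sum>g<m. if g < M1 then 1 / real p else 1) = (\<Sum>g<Suc M1. if g < M1 then 1 / real p else (1::real))"
        unfolding mM ..
      also have "\<dots> = real M1 / real p + 1" by simp
      also have "real M1 / real p = real r" using rpM p0 by (metis nonzero_mult_div_cancel_right of_nat_mult of_nat_0_less_iff less_irrefl)
      finally show ?thesis .
    qed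
    finally show "OPT_USW n m u \<le> real r + 1" .
    show "real r + 1 \<le> OPT_USW n m u"
      using opt_ge[OF fun_alloc(1)[OF f0lt], of u] fun_alloc(2)[OF f0lt, of u] f0val by simp
  qed
  define f1 where "f1 g = (if g = M1 then r else if g mod p < k then g div p else r + 1 + g)" for g
  have f1lt: "\<forall>g<m. f1 g < n"
  proof (intro allI impI)
    fix g assume g: "g < m"
    show "f1 g < n"
    proof (cases "g = M1")
      case True
      then show ?thesis using rc by (simp add: f1_def n_def)
    next
      case False
      then have "g < M1" using g mM by simp
      then have "g div p < r" using divr by (simp add: M1_def)
      then show ?thesis using rc g False by (simp add: f1_def n_def)
    qed
  qed
  have f1card: "\<forall>i<n. card {g. g < m \<and> f1 g = i} \<le> k"
  proof (intro allI impI)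
    fix i assume i: "i < n"
    show "card {g. g < m \<and> f1 g = i} \<le> k"
    proof (cases "i < r")
      case True
      have "card {g. g < m \<and> f1 g = i} \<le> card {..<k}"
      proof (rule card_inj_on_le[where f = "\<lambda>g. g mod p"])
        show "inj_on (\<lambda>g. g mod p) {g. g < m \<and> f1 g = i}"
        proof (rule inj_onI)
          fix x y assume x: "x \<in> {g. g < m \<and> f1 g = i}" and y: "y \<in> {g. g < m \<and> f1 g = i}"
            and e: "x mod p = y mod p"
          have "x \<noteq> M1" "y \<noteq> M1" using x y True by (auto simp: f1_def)
          then have "x div p = i" "y div p = i" using x y True by (auto simp: f1_def split: if_splits)
          then show "x = y" using e div_mult_mod_eq[of x p] div_mult_mod_eq[of y p] by metis
        qed
        show "(\<lambda>g. g mod p) ` {g. g < m \<and> f1 g = i} \<subseteq> {..<k}"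
        proof
          fix z assume "z \<in> (\<lambda>g. g mod p) ` {g. g < m \<and> f1 g = i}"
          then obtain x where x: "x < m" "f1 x = i" "z = x mod p" by auto
          have "x \<noteq> M1" using x True by (auto simp: f1_def)
          then have "x mod p < k" using x True by (auto simp: f1_def split: if_splits)
          then show "z \<in> {..<k}" using x by simp
        qed
      qed simp
      then show ?thesis by simp
    next
      case False
      have "card {g. g < m \<and> f1 g = i} \<le> Suc 0"
      proof (subst card_le_Suc0_iff_eq)
        show "finite {g. g < m \<and> f1 g = i}" by simp
        show "\<forall>x\<in>{g. g < m \<and> f1 g = i}. \<forall>y\<in>{g. g < m \<and> f1 g = i}. x = y"
        proof (intro ballI)
          fix x y assume x: "x \<in> {g. g < m \<and> f1 g = i}" and y: "y \<in> {g. g < m \<and> f1 g = i}"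
          have cz: "z = M1 \<and> i = r \<or> (z \<noteq> M1 \<and> i = r + 1 + z)" if z: "z < m" "f1 z = i" for z
          proof (cases "z = M1")
            case True
            then show ?thesis using z by (simp add: f1_def)
          next
            case zM: False
            then have zm: "z < M1" using z mM by simp
            have zd: "z div p < r" using divr zm by (simp add: M1_def)
            show ?thesis
            proof (cases "z mod p < k")
              case True
              then have "f1 z = z div p" using zM by (simp add: f1_def)
              then show ?thesis using z zd \<open>\<not> i < r\<close> by simp
            next
              case False
              then have "f1 z = r + 1 + z" using zM by (simp add: f1_def)
              then show ?thesis using z zM by simp
            qed
          qed
          have cx: "x = M1 \<and> i = r \<or> (x \<noteq> M1 \<and> i = r + 1 + x)" using cz x by blast
          have cy: "y = M1 \<and> i = r \<or> (y \<noteq> M1 \<and> i = r + 1 + y)" using cz y by blast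
          show "x = y" using cx cy by auto
        qed
      qed
      then show ?thesis using k0 by simp
    qed
  qed
  have f1val: "(\<Sum>g<m. u (f1 g) g) = real (r * k) / real p + 1"
  proof -
    have "(\<Sum>g<m. u (f1 g) g) = (\<Sum>g<Suc M1. if g < M1 then (if g mod p < k then 1 / real p else 0) else 1)"
      unfolding mM
    proof (intro sum.cong refl)
      fix g assume g: "g \<in> {..<Suc M1}"
      show "u (f1 g) g = (if g < M1 then (if g mod p < k then 1 / real p else 0) else 1)"
      proof (cases "g < M1")
        case True
        then have d: "g div p < r" using divr by (simp add: M1_def)
        show ?thesis using True d by (auto simp: u_def f1_def M1_def)
      next
        case False
        then have "g = M1" using g by simp
        then show ?thesis by (simp add: u_def f1_def M1_def)
      qed
    qed
    also have "\<dots> = (\<Sum>g<M1. if g mod p < k then 1 / real p else 0) + 1" by simp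
    also have "(\<Sum>g<M1. if g mod p < k then 1 / real p else 0) = (\<Sum>g\<in>{g\<in>{..<M1}. g mod p < k}. 1 / real p)"
      by (rule sum.inter_filter[symmetric]) simp
    also have "{g\<in>{..<M1}. g mod p < k} = {g. g < r * p \<and> g mod p < k}" using rpM by auto
    also have "(\<Sum>g\<in>{g. g < r * p \<and> g mod p < k}. 1 / real p) = real (r * k) / real p"
      using block_card[OF p0 kp, of r] by simp
    finally show ?thesis .
  qed
  have upper: "USW n u A \<le> real (r * k) / real p + 1" if A: "is_cardinal n m k A" for A
  proof -
    have al: "is_allocation n m A" and ck: "\<forall>i<n. card (A i) \<le> k" using A by (auto simp: is_cardinal_def)
    have sub: "\<forall>i<n. A i \<subseteq> {..<m}" using al by (simp add: is_allocation_def)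
    have finA: "finite (A i)" if "i < n" for i using sub that finite_subset by blast
    have rn: "r \<le> n" unfolding n_def using rc by simp
    have split: "USW n u A = (\<Sum>i<r. util u i (A i)) + (\<Sum>i\<in>{..<n} - {..<r}. util u i (A i))"
      unfolding USW_def using sum.subset_diff[of "{..<r}" "{..<n}" "\<lambda>i. util u i (A i)"] rn by simp
    have rich: "(\<Sum>i<r. util u i (A i)) \<le> real (r * k) / real p"
    proof -
      have "(\<Sum>i<r. util u i (A i)) \<le> (\<Sum>i<r. real k / real p)"
      proof (rule sum_mono)
        fix i assume i: "i \<in> {..<r}"
        have "util u i (A i) \<le> (\<Sum>g\<in>A i. 1 / real p)" unfolding util_def
          using i by (intro sum_mono) (auto simp: u_def)
        also have "\<dots> = real (card (A i)) / real p" by simp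
        also have "\<dots> \<le> real k / real p" using ck i rn p0 by (intro divide_right_mono) auto
        finally show "util u i (A i) \<le> real k / real p" .
      qed
      also have "\<dots> = real (r * k) / real p" by simp
      finally show ?thesis .
    qed
    define q where "q g = (if g = M1 then 1 else (0::real))" for g
    have poor: "(\<Sum>i\<in>{..<n} - {..<r}. util u i (A i)) \<le> 1"
    proof -
      have "(\<Sum>i\<in>{..<n} - {..<r}. util u i (A i)) = (\<Sum>i\<in>{..<n} - {..<r}. \<Sum>g\<in>A i. q g)"
        unfolding util_def by (intro sum.cong refl) (auto simp: u_def q_def M1_def)
      also have "\<dots> = sum q (\<Union>i\<in>{..<n} - {..<r}. A i)"
        using al finA by (subst sum.UNION_disjoint) (auto simp: is_allocation_def)
      also have "\<dots> \<le> sum q {..<m}"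
        using sub by (intro sum_mono2) (auto simp: q_def)
      also have "\<dots> = 1" unfolding q_def using mM by (subst sum.delta) auto
      finally show ?thesis .
    qed
    show ?thesis using split rich poor by simp
  qed
  have CARDeq: "MAX_CARD_USW n m k u = real (r * k) / real p + 1"
  proof (rule antisym)
    have "is_cardinal n m k (\<lambda>i. {g. g < m \<and> f1 g = i})"
      using fun_alloc(1)[OF f1lt] f1card by (simp add: is_cardinal_def)
    then show "MAX_CARD_USW n m k u \<le> real (r * k) / real p + 1"
      using upper by (intro card_le) auto
    show "real (r * k) / real p + 1 \<le> MAX_CARD_USW n m k u"
      using card_ge[OF f1lt f1card, of u] f1val by simp
  qed
  have ratio: "OPT_USW n m u / MAX_CARD_USW n m k u = poc_bound m k"
  proof -
    define x where "x = real c"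
    have x2: "x \<ge> 2" using c2 unfolding x_def by simp
    have kr: "real k > 0" using k0 by simp
    have rr: "real r = x - 1" using rc unfolding x_def by (metis add_diff_cancel_right' of_nat_1 of_nat_add)
    have pr: "real p = real k * (x + 1)" unfolding p_def x_def by (simp add: algebra_simps)
    have mr: "real m - 1 = real k * (x^2 - 1)"
    proof -
      have "1 \<le> c^2" using c2 by (simp add: one_le_power)
      then have "real (c^2 - 1) = x^2 - 1" unfolding x_def by (simp add: of_nat_diff)
      then show ?thesis using mdef by simp
    qed
    have sq: "sqrt (1 + (real m - 1) / real k) = x"
      using mr kr x2 by simp
    have pb: "poc_bound m k = (1 + x) / 2" unfolding poc_bound_def sq ..
    have "real (r * k) / real p = (x - 1) / (x + 1)"
      using kr x2 unfolding pr by (simp add: rr)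
    then have "OPT_USW n m u / MAX_CARD_USW n m k u = x / ((x - 1) / (x + 1) + 1)"
      unfolding OPTeq CARDeq using rr by simp
    also have "\<dots> = (1 + x) / 2" using x2 by (simp add: field_simps)
    finally show ?thesis using pb by (simp only:)
  qed
  show ?thesis using n0 mkn valid ratio by blast
qed


theorem theorem1:
  shows "(\<forall>n m k (u :: nat \<Rightarrow> nat \<Rightarrow> real).
            0 < n \<and> 0 < m \<and> 0 < k \<and> k < m \<and> m \<le> k * n \<and> valid_instance n m u
            \<longrightarrow> OPT_USW n m u / MAX_CARD_USW n m k u \<le> poc_bound m k)
       \<and> (\<forall>m k (c :: nat). 0 < k \<and> 2 \<le> c \<and> m = k * (c^2 - 1) + 1
            \<longrightarrow> (\<exists>n (u :: nat \<Rightarrow> nat \<Rightarrow> real). 0 < n \<and> m \<le> k * n \<and> valid_instance n m u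
                  \<and> OPT_USW n m u / MAX_CARD_USW n m k u = poc_bound m k))"
proof (intro conjI allI impI)
  fix n m k :: nat and u :: "nat \<Rightarrow> nat \<Rightarrow> real"
  assume "0 < n \<and> 0 < m \<and> 0 < k \<and> k < m \<and> m \<le> k * n \<and> valid_instance n m u"
  then show "OPT_USW n m u / MAX_CARD_USW n m k u \<le> poc_bound m k"
    using part1[of n m k u] by blast
next
  fix m k c :: nat
  assume "0 < k \<and> 2 \<le> c \<and> m = k * (c^2 - 1) + 1"
  then show "\<exists>n (u :: nat \<Rightarrow> nat \<Rightarrow> real). 0 < n \<and> m \<le> k * n \<and> valid_instance n m u
                  \<and> OPT_USW n m u / MAX_CARD_USW n m k u = poc_bound m k"
    using part2[of k c m] by blast
qed

end
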